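(* For any two words $w$ and $v$ such that $v$ is a rearrangement (permutation of the letters) of $w$, the words $w$ and $v$ are cyclic Knuth equivalent.
   Context: A word is a finite sequence of letters from a totally ordered alphabet. A transformation of type $K'$ replaces three consecutive letters $yzx$ of a word with $x<y\le z$ by $yxz$. A transformation of type $K''$ replaces three consecutive letters $xzy$ with $x\le y<z$ by $zxy$. An elementary Knuth transformation is a transformation of type $K'$ or $K''$ or the inverse of one of these. The rotation $R$ moves the last letter of a word to the front. An elementary cyclic Knuth transformation is an elementary Knuth transformation or $R$; two words are cyclic Knuth equivalent if one can be obtained from the other by a finite sequence of elementary cyclic Knuth transformations. *)

theory Defs
  imports Main "HOL-Library.Multiset"
begin

definition knuth_K1 :: "'a::linorder list \<Rightarrow> 'a list \<Rightarrow> bool" where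
  "knuth_K1 w w' \<longleftrightarrow> (\<exists>u v x y z. x < y \<and> y \<le> z \<and>
      w = u @ [y, z, x] @ v \<and> w' = u @ [y, x, z] @ v)"

definition knuth_K2 :: "'a::linorder list \<Rightarrow> 'a list \<Rightarrow> bool" where
  "knuth_K2 w w' \<longleftrightarrow> (\<exists>u v x y z. x \<le> y \<and> y < z \<and>
      w = u @ [x, z, y] @ v \<and> w' = u @ [z, x, y] @ v)"

definition elem_knuth :: "'a::linorder list \<Rightarrow> 'a list \<Rightarrow> bool" where
  "elem_knuth w w' \<longleftrightarrow> knuth_K1 w w' \<or> knuth_K2 w w' \<or> knuth_K1 w' w \<or> knuth_K2 w' w"

definition rotR :: "'a list \<Rightarrow> 'a list" where
  "rotR w = (if w = [] then [] else last w # butlast w)"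

definition elem_cyclic_knuth :: "'a::linorder list \<Rightarrow> 'a list \<Rightarrow> bool" where
  "elem_cyclic_knuth w w' \<longleftrightarrow> elem_knuth w w' \<or> w' = rotR w"

definition cyclic_knuth_equiv :: "'a::linorder list \<Rightarrow> 'a list \<Rightarrow> bool" where
  "cyclic_knuth_equiv w v \<longleftrightarrow> elem_cyclic_knuth\<^sup>*\<^sup>* w v"

end

theory Submission
  imports Defs
begin

abbreviation ce :: "'a::linorder list \<Rightarrow> 'a list \<Rightarrow> bool" where
  "ce \<equiv> cyclic_knuth_equiv"

lemma ce_refl: "ce w w"
  unfolding cyclic_knuth_equiv_def by simp

lemma ce_trans: "ce a b \<Longrightarrow> ce b c \<Longrightarrow> ce a c"
  unfolding cyclic_knuth_equiv_def by (rule rtranclp_trans)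

lemma ce_step: "elem_cyclic_knuth a b \<Longrightarrow> ce a b"
  unfolding cyclic_knuth_equiv_def by (rule r_into_rtranclp)

lemma ce_K1: "x < y \<Longrightarrow> y \<le> z \<Longrightarrow> ce (u@[y,z,x]@v) (u@[y,x,z]@v)"
  apply (rule ce_step)
  unfolding elem_cyclic_knuth_def elem_knuth_def knuth_K1_def by blast

lemma ce_K1r: "x < y \<Longrightarrow> y \<le> z \<Longrightarrow> ce (u@[y,x,z]@v) (u@[y,z,x]@v)"
  apply (rule ce_step)
  unfolding elem_cyclic_knuth_def elem_knuth_def knuth_K1_def by blast

lemma ce_K2r: "x \<le> y \<Longrightarrow> y < z \<Longrightarrow> ce (u@[z,x,y]@v) (u@[x,z,y]@v)"
  apply (rule ce_step)
  unfolding elem_cyclic_knuth_def elem_knuth_def knuth_K2_def by blast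

lemma ce_K2: "x \<le> y \<Longrightarrow> y < z \<Longrightarrow> ce (u@[x,z,y]@v) (u@[z,x,y]@v)"
  apply (rule ce_step)
  unfolding elem_cyclic_knuth_def elem_knuth_def knuth_K2_def by blast

lemma ce_rot: "ce (xs @ [x]) (x # xs)"
  by (rule ce_step) (simp add: elem_cyclic_knuth_def rotR_def)

lemma ce_swap: "ce (a @ b) (b @ a)"
proof (induction b arbitrary: a rule: rev_induct)
  case Nil
  then show ?case by (simp add: ce_refl)
next
  case (snoc c b)
  have 1: "ce (a @ b @ [c]) (c # a @ b)" using ce_rot[of "a @ b" c] by simp
  have 2: "ce (c # a @ b) ((b @ [c]) @ a)" using snoc.IH[of "c # a"] by simp
  show ?case using ce_trans[OF 1 2] by simp
qed

lemma elem_sym: "elem_cyclic_knuth a b \<Longrightarrow> ce b a"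
proof -
  assume h: "elem_cyclic_knuth a b"
  show "ce b a"
  proof (cases "elem_knuth a b")
    case True
    then have "elem_knuth b a" unfolding elem_knuth_def by blast
    then show ?thesis by (intro ce_step) (simp add: elem_cyclic_knuth_def)
  next
    case False
    then have b: "b = rotR a" using h by (simp add: elem_cyclic_knuth_def)
    show ?thesis
    proof (cases "a = []")
      case True
      then show ?thesis using b by (simp add: rotR_def ce_refl)
    next
      case False
      then have "b = [last a] @ butlast a" using b by (simp add: rotR_def)
      moreover have "a = butlast a @ [last a]" using False by simp
      ultimately show ?thesis using ce_swap[of "[last a]" "butlast a"] by metis
    qed
  qed
qed

lemma ce_sym: "ce a b \<Longrightarrow> ce b a"
  unfolding cyclic_knuth_equiv_def
proof (induction rule: rtranclp_induct)
  case base
  then show ?case by simp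
next
  case (step y z)
  have "ce z y" using elem_sym[OF step.hyps(2)] .
  then show ?case using step.IH unfolding cyclic_knuth_equiv_def by (rule rtranclp_trans)
qed

lemma passE:
  assumes "sorted E" "x < y" "\<forall>e\<in>set E. y \<le> e"
  shows "ce (u @ [y, x] @ E) (u @ [y] @ E @ [x])"
  using assms
proof (induction E arbitrary: u y)
  case Nil
  then show ?case by (simp add: ce_refl)
next
  case (Cons e E)
  have 1: "ce (u @ [y, x, e] @ E) (u @ [y, e, x] @ E)"
    using ce_K1r[of x y e u E] Cons.prems by simp
  have 2: "ce (u @ [y, e, x] @ E) (u @ [y] @ (e # E) @ [x])"
  proof -
    have "x < e" using Cons.prems by auto
    then show ?thesis using Cons.prems Cons.IH[of e "u @ [y]"] by simp
  qed
  show ?case using ce_trans[OF 1 2] by simp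
qed

lemma lemP:
  assumes "2 \<le> length q"
  shows "\<exists>q'. mset q' = mset q \<and> (\<forall>u v. ce (u@q@v) (u@q'@v)) \<and>
     ((\<exists>a b r. q' = a#b#r \<and> a \<le> b) \<or> (\<exists>r a b. q' = r@[a,b] \<and> b < a))"
  using assms
proof (induction q)
  case Nil
  then show ?case by simp
next
  case (Cons a r)
  show ?case
  proof (cases "length r = 1")
    case True
    then obtain b where r: "r = [b]" by (cases r) auto
    show ?thesis
    proof (cases "a \<le> b")
      case True
      then show ?thesis using r by (intro exI[of _ "a#r"]) (auto simp: ce_refl)
    next
      case False
      then show ?thesis using r
        by (intro exI[of _ "a#r"]) (auto simp: ce_refl intro!: exI[of _ "[]"])
    qed
  next
    case False
    then have lr: "2 \<le> length r" using Cons.prems by simp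
    then obtain c d s where rr: "r = c # d # s" by (cases r; cases "tl r") auto
    show ?thesis
    proof (cases "a \<le> c")
      case True
      then show ?thesis using rr by (intro exI[of _ "a#r"]) (auto simp: ce_refl)
    next
      case False
      obtain r' where r': "mset r' = mset r" "\<forall>u v. ce (u@r@v) (u@r'@v)"
        "(\<exists>a b t. r' = a#b#t \<and> a \<le> b) \<or> (\<exists>t a b. r' = t@[a,b] \<and> b < a)"
        using Cons.IH[OF lr] by blast
      have lift: "\<forall>u v. ce (u@(a#r)@v) (u@(a#r')@v)"
      proof (intro allI)
        fix u v
        show "ce (u@(a#r)@v) (u@(a#r')@v)" using r'(2)[rule_format, of "u@[a]" v] by simp
      qed
      from r'(3) show ?thesis
      proof
        assume "\<exists>t a b. r' = t@[a,b] \<and> b < a"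
        then obtain t a' b where "r' = t@[a',b]" "b < a'" by blast
        then show ?thesis using lift r'(1)
          by (intro exI[of _ "a#r'"]) (auto intro!: exI[of _ "a#t"])
      next
        assume "\<exists>c d t. r' = c#d#t \<and> c \<le> d"
        then obtain c' d' t where rt: "r' = c'#d'#t" "c' \<le> d'" by blast
        show ?thesis
        proof (cases "a \<le> c'")
          case True
          then show ?thesis using lift r'(1) rt by (intro exI[of _ "a#r'"]) auto
        next
          case False
          show ?thesis
          proof (cases "a \<le> d'")
            case True
            have "\<forall>u v. ce (u@(a#r)@v) (u@(a#d'#c'#t)@v)"
            proof (intro allI)
              fix u v
              have "ce (u@[a,c',d']@(t@v)) (u@[a,d',c']@(t@v))"
                using ce_K1r[of c' a d' u "t@v"] False True by simp
              then show "ce (u@(a#r)@v) (u@(a#d'#c'#t)@v)"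
                using lift rt ce_trans by fastforce
            qed
            then show ?thesis using r'(1) rt True
              by (intro exI[of _ "a#d'#c'#t"]) (auto simp: add_mset_commute)
          next
            case False2: False
            have "\<forall>u v. ce (u@(a#r)@v) (u@(c'#a#d'#t)@v)"
            proof (intro allI)
              fix u v
              have "ce (u@[a,c',d']@(t@v)) (u@[c',a,d']@(t@v))"
                using ce_K2r[of c' d' a u "t@v"] False False2 rt by simp
              then show "ce (u@(a#r)@v) (u@(c'#a#d'#t)@v)"
                using lift rt ce_trans by fastforce
            qed
            then show ?thesis using r'(1) rt False
              by (intro exI[of _ "c'#a#d'#t"]) (auto simp: add_mset_commute)
          qed
        qed
      qed
    qed
  qed
qed


lemma lemB:
  assumes "sorted E" "\<forall>e\<in>set E. M \<le> e" "\<forall>x\<in>set q. x < M"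
  shows "\<exists>p'. mset p' = mset p + mset q \<and> ce (p@[M]@q@E) (p'@[M]@E)"
  using assms
proof (induction "length q" arbitrary: p q rule: less_induct)
  case less
  show ?case
  proof (cases "length q < 2")
    case True
    show ?thesis
    proof (cases q)
      case Nil
      then show ?thesis by (auto simp: ce_refl)
    next
      case (Cons x q0)
      then have q: "q = [x]" using True by simp
      have xM: "x < M" using less.prems q by simp
      have 1: "ce (p @ [M, x] @ E) (p @ [M] @ E @ [x])"
        using passE[OF less.prems(1) xM less.prems(2)] .
      have 2: "ce ((p @ [M] @ E) @ [x]) ([x] @ (p @ [M] @ E))" by (rule ce_swap)
      have "ce (p @ [M] @ q @ E) ((x # p) @ [M] @ E)" using ce_trans[OF 1] 2 q by simp
      then show ?thesis using q by (intro exI[of _ "x # p"]) simp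
    qed
  next
    case False
    then have l2: "2 \<le> length q" by simp
    obtain q' where q': "mset q' = mset q" "\<forall>u v. ce (u@q@v) (u@q'@v)"
        "(\<exists>a b r. q' = a#b#r \<and> a \<le> b) \<or> (\<exists>r a b. q' = r@[a,b] \<and> b < a)"
      using lemP[OF l2] by blast
    have sq: "set q' = set q" using q'(1) by (metis set_mset_mset)
    have lq: "length q' = length q" using q'(1) by (metis size_mset)
    have 0: "ce (p @ [M] @ q @ E) (p @ [M] @ q' @ E)"
      using q'(2)[rule_format, of "p @ [M]" E] by simp
    from q'(3) show ?thesis
    proof
      assume "\<exists>a b r. q' = a#b#r \<and> a \<le> b"
      then obtain a b r where ab: "q' = a#b#r" "a \<le> b" by blast
      have bM: "b < M" using less.prems(3) sq ab by auto
      have 1: "ce (p @ [M,a,b] @ r @ E) (p @ [a,M,b] @ r @ E)"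
        using ce_K2r[OF ab(2) bM, of p "r @ E"] by simp
      have "length (b#r) < length q" using lq ab by simp
      moreover have "\<forall>x\<in>set (b#r). x < M" using less.prems(3) sq ab by auto
      ultimately obtain p' where p': "mset p' = mset (p @ [a]) + mset (b # r)"
        "ce ((p @ [a]) @ [M] @ (b#r) @ E) (p' @ [M] @ E)"
        using less.hyps less.prems(1,2) by blast
      have 2: "ce (p @ [a,M,b] @ r @ E) (p' @ [M] @ E)" using p'(2) by simp
      have "ce (p @ [M] @ q @ E) (p' @ [M] @ E)"
        using ce_trans[OF 0] ce_trans[OF 1 2] ab by simp
      moreover have "mset p' = mset p + mset q" using p'(1) q'(1) ab by (simp add: add_mset_commute)
      ultimately show ?thesis by blast
    next
      assume "\<exists>r a b. q' = r@[a,b] \<and> b < a"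
      then obtain r a b where ab: "q' = r@[a,b]" "b < a" by blast
      have aM0: "a < M" using less.prems(3) sq ab by auto
      have aM: "\<forall>e\<in>set E. a \<le> e" using aM0 less.prems(2)
        by (meson less_imp_le order_trans)
      have 1: "ce ((p @ [M] @ r) @ [a, b] @ E) ((p @ [M] @ r) @ [a] @ E @ [b])"
        using passE[OF less.prems(1) ab(2) aM] .
      have 2: "ce ((p @ [M] @ r @ [a] @ E) @ [b]) ([b] @ (p @ [M] @ r @ [a] @ E))"
        by (rule ce_swap)
      have 3: "ce (p @ [M] @ q @ E) ((b # p) @ [M] @ (r @ [a]) @ E)"
        using ce_trans[OF 0] ce_trans[OF 1] 2 ab by simp
      have "length (r @ [a]) < length q" using lq ab by simp
      moreover have "\<forall>x\<in>set (r @ [a]). x < M" using less.prems(3) sq ab by auto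
      ultimately obtain p' where p': "mset p' = mset (b # p) + mset (r @ [a])"
        "ce ((b # p) @ [M] @ (r @ [a]) @ E) (p' @ [M] @ E)"
        using less.hyps less.prems(1,2) by blast
      have "ce (p @ [M] @ q @ E) (p' @ [M] @ E)" using ce_trans[OF 3 p'(2)] .
      moreover have "mset p' = mset p + mset q" using p'(1) q'(1) ab by (simp add: add_mset_commute)
      ultimately show ?thesis by blast
    qed
  qed
qed

lemma split_last_max:
  fixes t :: "'a::linorder list"
  assumes "M \<in> set t" "\<forall>x\<in>set t. x \<le> M"
  shows "\<exists>p q. t = p @ [M] @ q \<and> (\<forall>x\<in>set q. x < M)"
  using assms
proof (induction t rule: rev_induct)
  case Nil
  then show ?case by simp
next
  case (snoc c t)
  show ?case
  proof (cases "c = M")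
    case True
    then show ?thesis by (intro exI[of _ t] exI[of _ "[]"]) simp
  next
    case False
    have "c \<le> M" using snoc.prems by simp
    then have cM: "c < M" using False by (rule le_neq_trans)
    have "M \<in> set t" using snoc.prems False by simp
    note this cM
    then obtain p q where "t = p @ [M] @ q" "\<forall>x\<in>set q. x < M"
      using snoc.IH snoc.prems by auto
    then show ?thesis using \<open>c < M\<close> by (intro exI[of _ p] exI[of _ "q @ [c]"]) auto
  qed
qed

lemma lemS:
  assumes "sorted E" "\<forall>x\<in>set t. \<forall>e\<in>set E. x \<le> e"
  shows "\<exists>s. sorted s \<and> mset s = mset t \<and> ce (t @ E) (s @ E)"
  using assms
proof (induction "length t" arbitrary: t E rule: less_induct)
  case less
  show ?case
  proof (cases "t = []")
    case True
    then show ?thesis by (auto simp: ce_refl)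
  next
    case False
    define M where "M = Max (set t)"
    have Mt: "M \<in> set t" using False M_def by simp
    have Mmax: "\<forall>x\<in>set t. x \<le> M" using M_def by simp
    obtain p q where pq: "t = p @ [M] @ q" "\<forall>x\<in>set q. x < M"
      using split_last_max[OF Mt Mmax] by blast
    have ME: "\<forall>e\<in>set E. M \<le> e" using less.prems(2) Mt by blast
    obtain p' where p': "mset p' = mset p + mset q" "ce (p@[M]@q@E) (p'@[M]@E)"
      using lemB[OF less.prems(1) ME pq(2)] by blast
    have sp': "set p' = set p \<union> set q" using p'(1)
      by (metis set_mset_mset set_mset_union)
    have "length p' = length p + length q"
      using arg_cong[OF p'(1), of size] by simp
    then have "length p' < length t" using pq(1) by simp
    moreover have "sorted (M # E)" using less.prems(1) ME by simp
    moreover have "\<forall>x\<in>set p'. \<forall>e\<in>set (M # E). x \<le> e"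
      using sp' pq less.prems(2) Mmax by auto
    ultimately obtain s where s: "sorted s" "mset s = mset p'" "ce (p' @ (M # E)) (s @ (M # E))"
      using less.hyps by blast
    have "set s = set p'" using s(2) by (metis set_mset_mset)
    then have "sorted (s @ [M])" using s(1) sp' pq Mmax by (auto simp: sorted_append)
    moreover have "mset (s @ [M]) = mset t" using s(2) p'(1) pq(1) by simp
    moreover have "ce (t @ E) ((s @ [M]) @ E)"
      using ce_trans[OF p'(2)] s(3) pq(1) by simp
    ultimately show ?thesis by blast
  qed
qed

theorem mainTheorem11:
  fixes w v :: "'a::linorder list"
  assumes "mset v = mset w"
  shows "cyclic_knuth_equiv w v"
proof -
  obtain s where s: "sorted s" "mset s = mset w" "ce w s"
    using lemS[of "[]" w] by auto
  obtain s' where s': "sorted s'" "mset s' = mset v" "ce v s'"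
    using lemS[of "[]" v] by auto
  have "s = s'" using s s' assms by (metis properties_for_sort)
  then have "ce s v" using ce_sym[OF s'(3)] by simp
  then show ?thesis using ce_trans[OF s(3)] by simp
qed

end
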